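(* For every positive integer $n$, $l_1(n)=a_1(n)=2^{n-1}$.
   Context: For a positive integer $m$, the triangle $T_m$ is an array whose row $x$ ($x=1,2,\dots$) has $x$ entries, in columns $0,\dots,x-1$. Row $1$ is the single entry $1$. For $x>1$, row $x$ is obtained from row $x-1$ by rotating it cyclically left by $m$ positions (the entry in column $c$ of row $x-1$ moves to column $(c-m)\bmod(x-1)\in\{0,\dots,x-2\}$ of row $x$), then appending in column $x-1$ a new entry equal to $1$ plus the entry in column $0$ of row $x-1$. $T_m(x,c)$ denotes the entry in row $x$, column $c$. Define $l_m(1)=1$ and, for $n\ge2$, $l_m(n)=\min\{x>l_m(n-1): T_m(x,0)=1\}$ (the rows headed by the value $1$); define $a_m(n)=\min\{x\in\mathbb{N}: T_m(x,x-1)=n\}$ (the row in which the value $n$ first appears). Here $m=1$. *)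

theory Defs
  imports Main
begin

text \<open>Row x of the triangle T_m, as a list of its x entries (columns 0..x-1).
  Row 0 is a dummy (empty). List.rotate m is cyclic left rotation by m:
  (rotate m xs) ! d = xs ! ((d + m) mod length xs), i.e. the entry in column c
  moves to column (c - m) mod (x-1).\<close>
fun Trow :: "nat \<Rightarrow> nat \<Rightarrow> nat list" where
  "Trow m 0 = []"
| "Trow m (Suc 0) = [1]"
| "Trow m (Suc (Suc k)) =
     rotate m (Trow m (Suc k)) @ [1 + hd (Trow m (Suc k))]"

definition T :: "nat \<Rightarrow> nat \<Rightarrow> nat \<Rightarrow> nat" where
  "T m x c = Trow m x ! c"

fun l :: "nat \<Rightarrow> nat \<Rightarrow> nat" where
  "l m 0 = 1"
| "l m (Suc 0) = 1"
| "l m (Suc (Suc k)) = (LEAST x. x > l m (Suc k) \<and> T m x 0 = 1)"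

definition a :: "nat \<Rightarrow> nat \<Rightarrow> nat" where
  "a m n = (LEAST x. x \<ge> 1 \<and> T m x (x - 1) = n)"

end

theory Submission
  imports Defs
begin

fun pc :: "nat \<Rightarrow> nat" where
  "pc 0 = 0"
| "pc (Suc n) = pc (Suc n div 2) + Suc n mod 2"

lemma pc_gen: "pc n = pc (n div 2) + n mod 2"
  by (cases n) auto

lemma pc_1[simp]: "pc (Suc 0) = 1" by simp

declare pc.simps(2)[simp del]

lemma pc_even: "pc (2*k) = pc k"
  using pc_gen[of "2*k"] by simp

lemma pc_odd: "pc (2*k+1) = pc k + 1"
  using pc_gen[of "2*k+1"] by simp

lemma pc_zero: "pc y = 0 \<longleftrightarrow> y = 0"
proof (induction y rule: less_induct)
  case (less y)
  show ?case
  proof (cases "y = 0")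
    case False
    then have "y div 2 < y" by simp
    then show ?thesis using less[of "y div 2"] pc_gen[of y] False by auto
  qed simp
qed

lemma pc_one: "pc y = 1 \<longleftrightarrow> (\<exists>j. y = 2^j)"
proof (induction y rule: less_induct)
  case (less y)
  show ?case
  proof (cases "y = 0")
    case True then show ?thesis by simp
  next
    case False
    then have lt: "y div 2 < y" by simp
    show ?thesis
    proof (cases "even y")
      case True
      then obtain k where k: "y = 2*k" by blast
      with False have "k > 0" by simp
      have "pc y = pc k" using k pc_even by simp
      also have "\<dots> = 1 \<longleftrightarrow> (\<exists>j. k = 2^j)" using less[of k] k False by simp
      also have "\<dots> \<longleftrightarrow> (\<exists>j. y = 2^j)"
      proof
        assume "\<exists>j. k = 2^j" then obtain j where "k = 2^j" by blast
        then show "\<exists>j. y = 2^j" using k by (intro exI[of _ "Suc j"]) simp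
      next
        assume "\<exists>j. y = 2^j" then obtain j where j: "y = 2^j" by blast
        with \<open>k>0\<close> k have "j \<noteq> 0" by (cases j) auto
        then obtain i where "j = Suc i" by (cases j) auto
        then show "\<exists>j. k = 2^j" using j k by auto
      qed
      finally show ?thesis .
    next
      case odd: False
      then obtain k where k: "y = 2*k+1" using oddE by blast
      have "pc y = pc k + 1" using k pc_odd by simp
      then have "pc y = 1 \<longleftrightarrow> k = 0" using pc_zero by simp
      also have "\<dots> \<longleftrightarrow> (\<exists>j. y = 2^j)"
      proof
        assume "k = 0" then show "\<exists>j. y = 2^j" using k by (intro exI[of _ 0]) simp
      next
        assume "\<exists>j. y = 2^j" then obtain j where j: "y = 2^j" by blast
        show "k = 0"
        proof (cases j)
          case 0 then show ?thesis using j k by simp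
        next
          case (Suc i) then show ?thesis using j odd by simp
        qed
      qed
      finally show ?thesis .
    qed
  qed
qed

lemma pc_bound: "pc y = n \<Longrightarrow> 2^n \<le> y + 1"
proof (induction y arbitrary: n rule: less_induct)
  case (less y)
  show ?case
  proof (cases "y = 0")
    case True then show ?thesis using less.prems by simp
  next
    case False
    show ?thesis
    proof (cases "even y")
      case True
      then obtain k where k: "y = 2*k" by blast
      with False have "k < y" by simp
      have "pc k = n" using k pc_even less.prems by simp
      then have "2^n \<le> k + 1" using less.IH \<open>k<y\<close> by blast
      then show ?thesis using k by simp
    next
      case False
      then obtain k where k: "y = 2*k+1" using oddE by blast
      then have "k < y" by simp
      have "pc k + 1 = n" using k pc_odd less.prems by simp
      then obtain m where m: "n = Suc m" "pc k = m" by auto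
      then have "2^m \<le> k + 1" using less.IH \<open>k<y\<close> by blast
      then show ?thesis using k m by simp
    qed
  qed
qed

lemma pc_full: "pc (2^n - 1) = n"
proof (induction n)
  case (Suc n)
  have "(2::nat)^Suc n - 1 = 2*(2^n - 1) + 1"
  proof -
    have "(2::nat)^n \<ge> 1" by simp
    moreover have "(2::nat)^Suc n = 2 * 2^n" by simp
    ultimately show ?thesis by linarith
  qed
  then show ?case using pc_odd Suc by simp
qed simp

lemma Trow_pc: "length (Trow 1 (Suc k)) = Suc k \<and> (\<forall>c<Suc k. Trow 1 (Suc k) ! c = pc (Suc k + c))"
proof (induction k)
  case 0 then show ?case using pc_even[of 1] by simp
next
  case (Suc k)
  define R where "R = Trow 1 (Suc k)"
  have L: "length R = Suc k" and N: "\<And>c. c < Suc k \<Longrightarrow> R ! c = pc (Suc k + c)"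
    using Suc unfolding R_def by auto
  have hd: "hd R = pc (Suc k)" proof -
    have "R \<noteq> []" using L by auto
    then show ?thesis using N[of 0] by (simp add: hd_conv_nth)
  qed
  have eq: "Trow 1 (Suc (Suc k)) = rotate 1 R @ [1 + hd R]" unfolding R_def by simp
  have "\<forall>c<Suc (Suc k). Trow 1 (Suc (Suc k)) ! c = pc (Suc (Suc k) + c)"
  proof (intro allI impI)
    fix c assume c: "c < Suc (Suc k)"
    show "Trow 1 (Suc (Suc k)) ! c = pc (Suc (Suc k) + c)"
    proof (cases "c < Suc k")
      case True
      then have "Trow 1 (Suc (Suc k)) ! c = R ! ((1 + c) mod Suc k)"
        unfolding eq using L by (simp add: nth_append nth_rotate1)
      also have "\<dots> = pc (Suc (Suc k) + c)"
      proof (cases "c < k")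
        case True then show ?thesis using N[of "Suc c"] by simp
      next
        case False
        with \<open>c < Suc k\<close> have "c = k" by simp
        then show ?thesis using N[of 0] pc_even[of "Suc k"] by (simp add: mult_2)
      qed
      finally show ?thesis .
    next
      case False
      with c have "c = Suc k" by simp
      then show ?thesis unfolding eq using L hd pc_odd[of "Suc k"]
        by (simp add: nth_append mult_2)
    qed
  qed
  then show ?case using eq L by simp
qed

lemma T_pc: "x \<ge> 1 \<Longrightarrow> c < x \<Longrightarrow> T 1 x c = pc (x + c)"
  using Trow_pc[of "x - 1"] unfolding T_def by simp

lemma l_pow: "l 1 (Suc k) = 2 ^ k"
proof (induction k)
  case 0 then show ?case by simp
next
  case (Suc k)
  have "l 1 (Suc (Suc k)) = (LEAST x. x > 2^k \<and> T 1 x 0 = 1)" using Suc by simp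
  also have "\<dots> = 2 ^ Suc k"
  proof (rule Least_equality)
    have p: "pc (2^Suc k) = 1" using pc_one by blast
    have "T 1 (2^Suc k) 0 = pc (2^Suc k)" using T_pc[of "2^Suc k" 0] by simp
    then show "2^k < (2::nat)^Suc k \<and> T 1 (2^Suc k) 0 = 1" using p by simp
  next
    fix y assume y: "2^k < y \<and> T 1 y 0 = 1"
    then have "pc y = 1" using T_pc[of y 0] by simp
    then obtain j where j: "y = 2^j" using pc_one by blast
    with y have "k < j" by (metis power_strict_increasing_iff one_less_numeral_iff semiring_norm(76))
    then show "2 ^ Suc k \<le> y" using j power_increasing[of "Suc k" j "2::nat"] by simp
  qed
  finally show ?case .
qed

lemma a_pow: "a 1 (Suc k) = 2 ^ k"
  unfolding a_def
proof (rule Least_equality)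
  have "(2::nat)^Suc k - 1 = 2^k + (2^k - 1)" by simp
  then show "1 \<le> (2::nat)^k \<and> T 1 (2^k) (2^k - 1) = Suc k"
    using T_pc[of "2^k" "2^k - 1"] pc_full[of "Suc k"] by simp
next
  fix y assume y: "1 \<le> y \<and> T 1 y (y - 1) = Suc k"
  then have "pc (y + (y - 1)) = Suc k" using T_pc[of y "y - 1"] by simp
  then have "2 ^ Suc k \<le> y + (y - 1) + 1" by (rule pc_bound)
  then show "2^k \<le> y" using y by simp
qed

theorem mainTheorem15:
  fixes n :: nat
  assumes "n \<ge> 1"
  shows "l 1 n = 2 ^ (n - 1) \<and> a 1 n = 2 ^ (n - 1)"
proof -
  obtain k where "n = Suc k" using assms by (cases n) auto
  then show ?thesis using l_pow a_pow by simp
qed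

end
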